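(* Under the hypotheses of the Simultaneous Polynomial Ergodicity theorem (Assumption (A), simultaneous polynomial drift $P_\gamma V\le V-cV^\alpha+b1_C$ for all $\gamma$ with $\alpha>2/3$ and $\sup_{x\in C}V(x)<\infty$), there exists $M<\infty$ such that for the AirMCMC chain started at $(X_0,\gamma_0)$, for all $n>0$ and all $m\ge M$, $$\mathbb P_{(X_0,\gamma_0)}\big(V^{2\alpha-1}(X_n)>m\big)\le M\,V(X_0)\,\frac{\log(1+m)}{m}.$$
   Context: Assumption (A): each $P_\gamma$ is $\pi$-invariant, $\pi$-irreducible, aperiodic, and $P_\gamma(x,\cdot)\ge\delta\nu(\cdot)$ for $x\in C$, all $\gamma$, with $\pi(C)>0$. $V:\mathcal X\to[1,\infty)$, $c>0$, $b<\infty$. AirMCMC chain: $(X_n,\gamma_n)$ with $\gamma_n$ produced by an arbitrary (possibly randomised) adaptation rule from the past; with lags $n_k$, $N_0=0$, $N_j=\sum_{k\le j}n_k$, for $N_j\le n<N_{j+1}$, conditionally on the past, $X_{n+1}\sim P_{\gamma_{N_j}}(X_n,\cdot)$. $\mathbb P_{(X_0,\gamma_0)}$ is its law started at $(X_0,\gamma_0)$. *)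

theory Defs
  imports "HOL-Probability.Probability"
begin

text \<open>A Markov kernel on S is a map K with K \<in> S \<rightarrow>M prob_algebra S.
  n-step kernel:\<close>
primrec kernel_pow :: "'x measure \<Rightarrow> ('x \<Rightarrow> 'x measure) \<Rightarrow> nat \<Rightarrow> 'x \<Rightarrow> 'x measure" where
  "kernel_pow S K 0 x = return S x"
| "kernel_pow S K (Suc n) x = bind (kernel_pow S K n x) K"

definition pi_invariant :: "'x measure \<Rightarrow> 'x measure \<Rightarrow> ('x \<Rightarrow> 'x measure) \<Rightarrow> bool" where
  "pi_invariant S \<pi> K \<longleftrightarrow>
     (\<forall>A\<in>sets S. measure \<pi> A = (\<integral>x. measure (K x) A \<partial>\<pi>))"

definition pi_irreducible :: "'x measure \<Rightarrow> 'x measure \<Rightarrow> ('x \<Rightarrow> 'x measure) \<Rightarrow> bool" where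
  "pi_irreducible S \<pi> K \<longleftrightarrow>
     (\<forall>x\<in>space S. \<forall>A\<in>sets S. measure \<pi> A > 0 \<longrightarrow>
        (\<exists>n\<ge>1. measure (kernel_pow S K n x) A > 0))"

definition aperiodic_kernel :: "'x measure \<Rightarrow> 'x measure \<Rightarrow> ('x \<Rightarrow> 'x measure) \<Rightarrow> bool" where
  "aperiodic_kernel S \<pi> K \<longleftrightarrow>
     \<not> (\<exists>d::nat. \<exists>D :: nat \<Rightarrow> 'x set. d \<ge> 2 \<and>
          (\<forall>i<d. D i \<in> sets S \<and> measure \<pi> (D i) > 0) \<and>
          (\<forall>i<d. \<forall>j<d. i \<noteq> j \<longrightarrow> D i \<inter> D j = {}) \<and>
          (\<forall>i<d. \<forall>x\<in>D i. measure (K x) (D (Suc i mod d)) = 1))"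

definition lag_time :: "(nat \<Rightarrow> nat) \<Rightarrow> nat \<Rightarrow> nat" where
  "lag_time lags j = (\<Sum>k\<in>{1..j}. lags k)"

text \<open>AirMCMC chain (X_n, gamma_n) on a probability space Mw with filtration F,
  started at (x0, g0): adapted to F, with arbitrary (possibly randomised) adaptation,
  and for N_j \<le> n < N_{j+1}, conditionally on F_n, X_{n+1} ~ P_{gamma_{N_j}}(X_n, .)
  (written out via the defining property of conditional probability).\<close>
definition airmcmc_chain ::
  "'x measure \<Rightarrow> 'g measure \<Rightarrow> ('g \<Rightarrow> 'x \<Rightarrow> 'x measure) \<Rightarrow> (nat \<Rightarrow> nat) \<Rightarrow>
   'w measure \<Rightarrow> (nat \<Rightarrow> 'w measure) \<Rightarrow> (nat \<Rightarrow> 'w \<Rightarrow> 'x) \<Rightarrow> (nat \<Rightarrow> 'w \<Rightarrow> 'g) \<Rightarrow>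
   'x \<Rightarrow> 'g \<Rightarrow> bool" where
  "airmcmc_chain S G P lags Mw F X \<gamma> x0 g0 \<longleftrightarrow>
     prob_space Mw \<and>
     (\<forall>n. subalgebra Mw (F n)) \<and>
     (\<forall>n. sets (F n) \<subseteq> sets (F (Suc n))) \<and>
     (\<forall>n. X n \<in> F n \<rightarrow>\<^sub>M S) \<and>
     (\<forall>n. \<gamma> n \<in> F n \<rightarrow>\<^sub>M G) \<and>
     (\<forall>\<omega>\<in>space Mw. X 0 \<omega> = x0 \<and> \<gamma> 0 \<omega> = g0) \<and>
     (\<forall>j n. lag_time lags j \<le> n \<and> n < lag_time lags (Suc j) \<longrightarrow>
        (\<forall>A\<in>sets S. \<forall>B\<in>sets (F n).
           measure Mw (B \<inter> {\<omega>\<in>space Mw. X (Suc n) \<omega> \<in> A}) =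
           (\<integral>\<omega>. indicator B \<omega> * measure (P (\<gamma> (lag_time lags j) \<omega>) (X n \<omega>)) A \<partial>Mw)))"

end

theory Submission
  imports Defs
begin


lemma tangent_concave:
  fixes f f' :: "real \<Rightarrow> real"
  assumes der: "\<And>x. x > 0 \<Longrightarrow> (f has_real_derivative f' x) (at x)"
    and mono: "\<And>x y. 0 < x \<Longrightarrow> x \<le> y \<Longrightarrow> f' y \<le> f' x"
    and y: "y > 0" and z: "z > 0"
  shows "f y \<le> f z + f' z * (y - z)"
proof (cases "y = z")
  case True then show ?thesis by simp
next
  case False
  show ?thesis
  proof (cases "z < y")
    case True
    obtain w where w: "z < w" "w < y" "f y - f z = (y - z) * f' w"
      using MVT2[OF True, of f f'] der z by force
    have "f' w \<le> f' z" using mono[of z w] w z by simp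
    hence "(y - z) * f' w \<le> (y - z) * f' z" using True by (intro mult_left_mono) auto
    then show ?thesis using w by (simp add: algebra_simps)
  next
    case False
    hence lt: "y < z" using \<open>y \<noteq> z\<close> by simp
    obtain w where w: "y < w" "w < z" "f z - f y = (z - y) * f' w"
      using MVT2[OF lt, of f f'] der y by force
    have "f' z \<le> f' w" using mono[of w z] w y by simp
    hence "(z - y) * f' z \<le> (z - y) * f' w" using lt by (intro mult_left_mono) auto
    then show ?thesis using w by (simp add: algebra_simps)
  qed
qed

lemma powr_tangent:
  fixes \<beta> y z :: real
  assumes "0 < \<beta>" "\<beta> \<le> 1" "y > 0" "z > 0"
  shows "y powr \<beta> \<le> z powr \<beta> + \<beta> * z powr (\<beta> - 1) * (y - z)"
proof -
  have "y powr \<beta> \<le> z powr \<beta> + (\<lambda>x. \<beta> * x powr (\<beta> - 1)) z * (y - z)"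
  proof (rule tangent_concave[where f="\<lambda>x. x powr \<beta>"])
    show "((\<lambda>x. x powr \<beta>) has_real_derivative \<beta> * x powr (\<beta> - 1)) (at x)" if "x > 0" for x
      using has_real_derivative_powr[OF that] by simp
    show "\<beta> * y' powr (\<beta> - 1) \<le> \<beta> * x powr (\<beta> - 1)" if "0 < x" "x \<le> y'" for x y'
      using powr_mono2'[of "\<beta> - 1" x y'] that assms by (intro mult_left_mono) auto
  qed (use assms in auto)
  then show ?thesis by simp
qed

definition hh :: "real \<Rightarrow> real \<Rightarrow> real \<Rightarrow> real" where
  "hh \<beta> s z = (z powr \<beta> + s) powr (1/\<beta>)"

definition hd :: "real \<Rightarrow> real \<Rightarrow> real \<Rightarrow> real" where
  "hd \<beta> s z = (1 + s * z powr (-\<beta>)) powr (1/\<beta> - 1)"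

lemma hh_deriv:
  assumes "0 < \<beta>" "\<beta> < 1" "s \<ge> 0" "z > 0"
  shows "((hh \<beta> s) has_real_derivative hd \<beta> s z) (at z)"
proof -
  have pos: "z powr \<beta> + s > 0" using assms by (simp add: add_pos_nonneg)
  have d: "((\<lambda>x. (x powr \<beta> + s) powr (1/\<beta>)) has_real_derivative
      (1/\<beta>) * (z powr \<beta> + s) powr (1/\<beta> - 1) * (\<beta> * z powr (\<beta> - 1))) (at z)"
    using assms pos by (auto intro!: derivative_eq_intros)
  have e1: "(1/\<beta>) * (z powr \<beta> + s) powr (1/\<beta> - 1) * (\<beta> * z powr (\<beta> - 1))
      = (z powr \<beta> + s) powr (1/\<beta> - 1) * z powr (\<beta> - 1)" using assms by simp
  have e2: "z powr (\<beta> - 1) = (z powr (-\<beta>)) powr (1/\<beta> - 1)"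
  proof -
    have "-\<beta> * (1/\<beta> - 1) = \<beta> - 1" using assms by (simp add: field_simps)
    then show ?thesis by (simp add: powr_powr)
  qed
  have e3: "(z powr \<beta> + s) powr (1/\<beta> - 1) * (z powr (-\<beta>)) powr (1/\<beta> - 1)
      = ((z powr \<beta> + s) * z powr (-\<beta>)) powr (1/\<beta> - 1)"
    using pos by (simp add: powr_mult)
  have e4: "(z powr \<beta> + s) * z powr (-\<beta>) = 1 + s * z powr (-\<beta>)"
    using assms by (simp add: distrib_right powr_add[symmetric])
  have eq: "(1/\<beta>) * (z powr \<beta> + s) powr (1/\<beta> - 1) * (\<beta> * z powr (\<beta> - 1)) = hd \<beta> s z"
    unfolding hd_def using e1 e2 e3 e4 by metis
  show ?thesis unfolding hh_def[abs_def] using d by (simp only: eq)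
qed

lemma hd_mono:
  assumes "0 < \<beta>" "\<beta> < 1" "s \<ge> 0" "0 < x" "x \<le> y"
  shows "hd \<beta> s y \<le> hd \<beta> s x"
proof -
  have "y powr (-\<beta>) \<le> x powr (-\<beta>)" using powr_mono2'[of "-\<beta>" x y] assms by auto
  hence "1 + s * y powr (-\<beta>) \<le> 1 + s * x powr (-\<beta>)" using assms by (simp add: mult_left_mono)
  moreover have "0 \<le> 1 + s * y powr (-\<beta>)" using assms by simp
  moreover have "0 \<le> 1/\<beta> - 1" using assms by simp
  ultimately show ?thesis unfolding hd_def by (intro powr_mono2) auto
qed

lemma hd_nonneg: "hd \<beta> s z \<ge> 0" unfolding hd_def by simp
lemma hh_nonneg: "hh \<beta> s z \<ge> 0" unfolding hh_def by simp

lemma hh_tangent: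
  assumes "0 < \<beta>" "\<beta> < 1" "s \<ge> 0" "y > 0" "z > 0"
  shows "hh \<beta> s y \<le> hh \<beta> s z + hd \<beta> s z * (y - z)"
  by (rule tangent_concave[where f="hh \<beta> s" and f'="hd \<beta> s"])
     (use assms hh_deriv hd_mono in auto)

lemma hh_zero: "0 < \<beta> \<Longrightarrow> z > 0 \<Longrightarrow> hh \<beta> 0 z = z"
  unfolding hh_def by (simp add: powr_powr)

lemma hh_mono_z:
  assumes "0 < \<beta>" "s \<ge> 0" "0 < x" "x \<le> y"
  shows "hh \<beta> s x \<le> hh \<beta> s y"
  unfolding hh_def using assms by (intro powr_mono2 add_right_mono powr_mono2) auto

lemma hh_drift:
  assumes b: "0 < \<beta>" "\<beta> < 1" and s: "s \<ge> 0" and c: "c > 0"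
    and z: "z > 0" and zd: "z - c * z powr (1 - \<beta>) > 0"
  shows "hh \<beta> (s + \<beta> * c) (z - c * z powr (1 - \<beta>)) \<le> hh \<beta> s z"
proof -
  let ?w = "z - c * z powr (1 - \<beta>)"
  have "?w powr \<beta> \<le> z powr \<beta> + \<beta> * z powr (\<beta> - 1) * (?w - z)"
    using powr_tangent[of \<beta> ?w z] b z zd by auto
  also have "\<beta> * z powr (\<beta> - 1) * (?w - z) = - \<beta> * c * (z powr (\<beta> - 1) * z powr (1 - \<beta>))"
    by (simp add: algebra_simps)
  also have "z powr (\<beta> - 1) * z powr (1 - \<beta>) = 1" using z by (simp add: powr_add[symmetric])
  finally have "?w powr \<beta> + (s + \<beta> * c) \<le> z powr \<beta> + s" by simp
  moreover have "0 \<le> ?w powr \<beta> + (s + \<beta> * c)" using b c s by simp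
  ultimately show ?thesis unfolding hh_def using b by (intro powr_mono2) auto
qed

lemma hh_lower:
  assumes b: "0 < \<beta>" "\<beta> \<le> 1/2" and s: "s \<ge> 0" and t: "t > 0" "t \<le> z"
  shows "hh \<beta> s z \<ge> t powr (1 - 2*\<beta>) * s^2" and "hh \<beta> s z \<ge> t"
proof -
  have "hh \<beta> s z \<ge> hh \<beta> s t" using hh_mono_z[of \<beta> s t z] assms by auto
  have T: "t powr \<beta> > 0" using t by simp
  have "hh \<beta> s t = (t powr \<beta> + s) powr (1/\<beta> - 2 + 2)"
    unfolding hh_def by simp
  also have "\<dots> = (t powr \<beta> + s) powr (1/\<beta> - 2) * (t powr \<beta> + s) powr 2"
    by (rule powr_add)
  also have "(t powr \<beta> + s) powr 2 = (t powr \<beta> + s)^2" using T s by (simp add: powr_numeral add_pos_nonneg)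
  finally have A0: "hh \<beta> s t = (t powr \<beta> + s) powr (1/\<beta> - 2) * (t powr \<beta> + s)^2" .
  have "(t powr \<beta> + s)^2 \<ge> s^2" using T s by (intro power_mono) auto
  hence A: "hh \<beta> s t \<ge> (t powr \<beta> + s) powr (1/\<beta> - 2) * s^2"
    unfolding A0 by (intro mult_left_mono) auto
  have "(t powr \<beta> + s) powr (1/\<beta> - 2) \<ge> (t powr \<beta>) powr (1/\<beta> - 2)"
    using T s b by (intro powr_mono2) (auto simp: field_simps)
  also have "(t powr \<beta>) powr (1/\<beta> - 2) = t powr (1 - 2*\<beta>)"
  proof -
    have "\<beta> * (1/\<beta> - 2) = 1 - 2*\<beta>" using b by (simp add: field_simps)
    then show ?thesis by (simp add: powr_powr)
  qed
  finally have "hh \<beta> s t \<ge> t powr (1 - 2*\<beta>) * s^2"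
    using A by (meson order_trans mult_right_mono zero_le_power2)
  then show "hh \<beta> s z \<ge> t powr (1 - 2*\<beta>) * s^2" using \<open>hh \<beta> s z \<ge> hh \<beta> s t\<close> by linarith
  have "hh \<beta> s t \<ge> (t powr \<beta>) powr (1/\<beta>)"
    unfolding hh_def using T s b by (intro powr_mono2) auto
  also have "(t powr \<beta>) powr (1/\<beta>) = t" using b t by (simp add: powr_powr)
  finally show "hh \<beta> s z \<ge> t" using \<open>hh \<beta> s z \<ge> hh \<beta> s t\<close> by linarith
qed




lemma jensen_step:
  fixes M :: "'x measure" and V :: "'x \<Rightarrow> real"
  assumes M: "prob_space M" and Vm: "V \<in> borel_measurable M" and V1: "\<forall>y\<in>space M. V y \<ge> 1"
    and I: "(\<integral>\<^sup>+ y. ennreal (V y) \<partial>M) \<le> ennreal z0" and z0: "z0 > 0"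
    and b: "0 < \<beta>" "\<beta> < 1" and s: "s \<ge> 0"
  shows "(\<integral>\<^sup>+ y. ennreal (hh \<beta> s (V y)) \<partial>M) \<le> ennreal (hh \<beta> s z0)"
proof -
  interpret prob_space M by fact
  have Vnn: "AE y in M. 0 \<le> V y" using V1 by (intro AE_I2) (auto intro: order_trans[of 0 1])
  have intV: "integrable M V"
    by (rule integrableI_nonneg[OF Vm Vnn]) (use I in \<open>simp add: order_le_less_trans\<close>)
  have "ennreal (integral\<^sup>L M V) \<le> ennreal z0"
    using I nn_integral_eq_integral[OF intV Vnn] by simp
  hence IV: "integral\<^sup>L M V \<le> z0" using z0 by (simp add: ennreal_le_iff)
  define A where "A y = hh \<beta> s z0 + hd \<beta> s z0 * (V y - z0)" for y
  have pt: "hh \<beta> s (V y) \<le> A y" if "y \<in> space M" for y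
    unfolding A_def using hh_tangent[of \<beta> s "V y" z0] V1 that z0 b s by force
  have intA: "integrable M A" unfolding A_def using intV by auto
  have Ann: "AE y in M. 0 \<le> A y"
    using pt hh_nonneg by (intro AE_I2) (meson order_trans)
  have "(\<integral>\<^sup>+ y. ennreal (hh \<beta> s (V y)) \<partial>M) \<le> (\<integral>\<^sup>+ y. ennreal (A y) \<partial>M)"
    using pt by (intro nn_integral_mono) (auto simp: ennreal_leI)
  also have "\<dots> = ennreal (integral\<^sup>L M A)" using nn_integral_eq_integral[OF intA Ann] by simp
  also have "integral\<^sup>L M A = hh \<beta> s z0 + hd \<beta> s z0 * (integral\<^sup>L M V - z0)"
    unfolding A_def using intV prob_space by simp
  also have "\<dots> \<le> hh \<beta> s z0" using IV hd_nonneg[of \<beta> s z0]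
    by (simp add: mult_nonneg_nonpos)
  finally show ?thesis by (simp add: ennreal_leI)
qed




lemma lag_time_Suc: "lag_time lags (Suc j) = lag_time lags j + lags (Suc j)"
  unfolding lag_time_def by simp

lemma exists_lag:
  assumes "\<forall>k\<ge>1. lags k \<ge> (1::nat)"
  shows "\<exists>j. lag_time lags j \<le> n \<and> n < lag_time lags (Suc j)"
proof (induction n)
  case 0
  have "lag_time lags 1 \<ge> 1" using assms by (simp add: lag_time_def)
  then show ?case by (intro exI[of _ 0]) (simp add: lag_time_def)
next
  case (Suc n)
  then obtain j where j: "lag_time lags j \<le> n" "n < lag_time lags (Suc j)" by blast
  show ?case
  proof (cases "Suc n < lag_time lags (Suc j)")
    case True then show ?thesis using j by (intro exI[of _ j]) simp
  next
    case False
    hence e: "Suc n = lag_time lags (Suc j)" using j by simp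
    have "lags (Suc (Suc j)) \<ge> 1" using assms by simp
    then show ?thesis using e by (intro exI[of _ "Suc j"]) (simp add: lag_time_Suc[of lags "Suc j"])
  qed
qed

locale chainctx =
  fixes S :: "'x measure" and G :: "'g measure" and P :: "'g \<Rightarrow> 'x \<Rightarrow> 'x measure"
    and lags :: "nat \<Rightarrow> nat" and Mw :: "'w measure" and F :: "nat \<Rightarrow> 'w measure"
    and X :: "nat \<Rightarrow> 'w \<Rightarrow> 'x" and \<gamma> :: "nat \<Rightarrow> 'w \<Rightarrow> 'g" and x0 :: 'x and g0 :: 'g
  assumes kernel: "(\<lambda>(g, x). P g x) \<in> G \<Otimes>\<^sub>M S \<rightarrow>\<^sub>M prob_algebra S"
    and chain: "airmcmc_chain S G P lags Mw F X \<gamma> x0 g0"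
    and lags_pos: "\<forall>k\<ge>1. lags k \<ge> 1"
begin

lemma prob: "prob_space Mw" using chain unfolding airmcmc_chain_def by blast

sublocale prob_space Mw by (rule prob)

lemma subalg: "subalgebra Mw (F n)" using chain unfolding airmcmc_chain_def by blast

lemma Fmono: "i \<le> j \<Longrightarrow> sets (F i) \<subseteq> sets (F j)"
  using chain lift_Suc_mono_le[of "\<lambda>n. sets (F n)" i j] unfolding airmcmc_chain_def by blast

lemma X_F: "X n \<in> F n \<rightarrow>\<^sub>M S" using chain unfolding airmcmc_chain_def by blast
lemma g_F: "\<gamma> n \<in> F n \<rightarrow>\<^sub>M G" using chain unfolding airmcmc_chain_def by blast

lemma X_meas[measurable]: "X n \<in> Mw \<rightarrow>\<^sub>M S"
  using measurable_from_subalg[OF subalg X_F] .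
lemma g_meas[measurable]: "\<gamma> n \<in> Mw \<rightarrow>\<^sub>M G"
  using measurable_from_subalg[OF subalg g_F] .

lemma F_sets: "B \<in> sets (F n) \<Longrightarrow> B \<in> sets Mw"
  using subalg[of n] unfolding subalgebra_def by blast

lemma X0: "\<omega> \<in> space Mw \<Longrightarrow> X 0 \<omega> = x0" using chain unfolding airmcmc_chain_def by blast

lemma trans_cond:
  "lag_time lags j \<le> n \<Longrightarrow> n < lag_time lags (Suc j) \<Longrightarrow> A \<in> sets S \<Longrightarrow> B \<in> sets (F n) \<Longrightarrow>
   measure Mw (B \<inter> {\<omega>\<in>space Mw. X (Suc n) \<omega> \<in> A}) =
   (\<integral>\<omega>. indicator B \<omega> * measure (P (\<gamma> (lag_time lags j) \<omega>) (X n \<omega>)) A \<partial>Mw)"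
  using chain unfolding airmcmc_chain_def by blast

lemma transition:
  assumes f[measurable]: "f \<in> borel_measurable S" and B: "B \<in> sets (F n)"
  shows "\<exists>N. (\<integral>\<^sup>+\<omega>. indicator B \<omega> * f (X (Suc n) \<omega>) \<partial>Mw) =
             (\<integral>\<^sup>+\<omega>. indicator B \<omega> * (\<integral>\<^sup>+y. f y \<partial>P (\<gamma> N \<omega>) (X n \<omega>)) \<partial>Mw)"
proof -
  obtain j where j: "lag_time lags j \<le> n" "n < lag_time lags (Suc j)"
    using exists_lag[OF lags_pos] by blast
  define N where "N = lag_time lags j"
  define K where "K \<omega> = P (\<gamma> N \<omega>) (X n \<omega>)" for \<omega>
  have BM[measurable]: "B \<in> sets Mw" using F_sets[OF B] .
  have Kp: "K \<in> Mw \<rightarrow>\<^sub>M prob_algebra S"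
  proof -
    have "(\<lambda>\<omega>. (\<gamma> N \<omega>, X n \<omega>)) \<in> Mw \<rightarrow>\<^sub>M G \<Otimes>\<^sub>M S" by measurable
    from measurable_comp[OF this kernel] show ?thesis unfolding K_def comp_def by simp
  qed
  have K[measurable]: "K \<in> Mw \<rightarrow>\<^sub>M subprob_algebra S" using measurable_prob_algebraD[OF Kp] .
  have Kprob: "prob_space (K \<omega>)" "sets (K \<omega>) = sets S" if "\<omega> \<in> space Mw" for \<omega>
    using measurable_space[OF Kp that] by (auto simp: space_prob_algebra)
  define D where "D = density Mw (indicator B)"
  have sD: "sets D = sets Mw" unfolding D_def by simp
  have KD: "K \<in> D \<rightarrow>\<^sub>M subprob_algebra S" using K by (simp add: measurable_cong_sets[OF sD refl])
  have XD: "X (Suc n) \<in> D \<rightarrow>\<^sub>M S" by (simp add: measurable_cong_sets[OF sD refl])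
  have spD: "space D \<noteq> {}" unfolding D_def using not_empty by simp
  have eq: "distr D S (X (Suc n)) = D \<bind> K"
  proof (rule measure_eqI)
    show "sets (distr D S (X (Suc n))) = sets (D \<bind> K)"
      using Kprob by (subst sets_bind[OF _ spD]) (auto simp: sD[THEN sets_eq_imp_space_eq])
  next
    fix A assume "A \<in> sets (distr D S (X (Suc n)))"
    hence A[measurable]: "A \<in> sets S" by simp
    have "emeasure (distr D S (X (Suc n))) A = emeasure D (X (Suc n) -` A \<inter> space D)"
      by (rule emeasure_distr[OF XD A])
    also have "\<dots> = (\<integral>\<^sup>+\<omega>. indicator B \<omega> * indicator (X (Suc n) -` A \<inter> space Mw) \<omega> \<partial>Mw)"
      unfolding D_def by (subst emeasure_density) (auto simp: sD[THEN sets_eq_imp_space_eq])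
    also have "\<dots> = (\<integral>\<^sup>+\<omega>. indicator (B \<inter> {\<omega>\<in>space Mw. X (Suc n) \<omega> \<in> A}) \<omega> \<partial>Mw)"
      by (intro nn_integral_cong) (auto simp: indicator_def)
    also have "\<dots> = emeasure Mw (B \<inter> {\<omega>\<in>space Mw. X (Suc n) \<omega> \<in> A})"
      by (rule nn_integral_indicator) measurable
    also have "\<dots> = ennreal (measure Mw (B \<inter> {\<omega>\<in>space Mw. X (Suc n) \<omega> \<in> A}))"
      by (simp add: emeasure_eq_measure)
    also have "measure Mw (B \<inter> {\<omega>\<in>space Mw. X (Suc n) \<omega> \<in> A}) =
        (\<integral>\<omega>. indicator B \<omega> * measure (K \<omega>) A \<partial>Mw)"
      unfolding K_def N_def by (rule trans_cond[OF j A B])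
    also have "ennreal (\<integral>\<omega>. indicator B \<omega> * measure (K \<omega>) A \<partial>Mw) =
        (\<integral>\<^sup>+\<omega>. ennreal (indicator B \<omega> * measure (K \<omega>) A) \<partial>Mw)"
    proof (rule nn_integral_eq_integral[symmetric])
      have m: "(\<lambda>\<omega>. measure (K \<omega>) A) \<in> borel_measurable Mw"
        using measurable_comp[OF Kp measurable_measure_prob_algebra[OF A]] by (simp add: comp_def)
      show "integrable Mw (\<lambda>\<omega>. indicator B \<omega> * measure (K \<omega>) A)"
        by (rule integrable_const_bound[where B=1]) (use m Kprob(1) in \<open>auto intro!: AE_I2 simp: indicator_def prob_space.prob_le_1\<close>)
    qed auto
    also have "\<dots> = (\<integral>\<^sup>+\<omega>. indicator B \<omega> * emeasure (K \<omega>) A \<partial>Mw)"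
      by (intro nn_integral_cong) (auto simp: finite_measure.emeasure_eq_measure[OF prob_space.finite_measure[OF Kprob(1)]] ennreal_mult indicator_def)
    also have "\<dots> = (\<integral>\<^sup>+\<omega>. emeasure (K \<omega>) A \<partial>D)"
      unfolding D_def by (subst nn_integral_density) auto
    also have "\<dots> = emeasure (D \<bind> K) A"
      by (rule emeasure_bind[OF spD KD A, symmetric])
    finally show "emeasure (distr D S (X (Suc n))) A = emeasure (D \<bind> K) A" .
  qed
  have "(\<integral>\<^sup>+\<omega>. indicator B \<omega> * f (X (Suc n) \<omega>) \<partial>Mw) = (\<integral>\<^sup>+\<omega>. f (X (Suc n) \<omega>) \<partial>D)"
    unfolding D_def by (subst nn_integral_density) auto
  also have "\<dots> = (\<integral>\<^sup>+y. f y \<partial>distr D S (X (Suc n)))"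
    by (rule nn_integral_distr[symmetric, OF XD]) simp
  also have "\<dots> = (\<integral>\<^sup>+y. f y \<partial>(D \<bind> K))" by (simp add: eq)
  also have "\<dots> = (\<integral>\<^sup>+\<omega>. \<integral>\<^sup>+y. f y \<partial>K \<omega> \<partial>D)" by (rule nn_integral_bind[OF f KD])
  also have "\<dots> = (\<integral>\<^sup>+\<omega>. indicator B \<omega> * (\<integral>\<^sup>+y. f y \<partial>K \<omega>) \<partial>Mw)"
    unfolding D_def by (subst nn_integral_density) (auto intro: nn_integral_measurable_subprob_algebra2)
  finally show ?thesis unfolding K_def by blast
qed

end



locale kd =
  fixes S :: "'x measure" and G :: "'g measure" and P :: "'g \<Rightarrow> 'x \<Rightarrow> 'x measure"
    and V :: "'x \<Rightarrow> real" and C :: "'x set" and c b \<alpha> Kc :: real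
  assumes kernel: "(\<lambda>(g, x). P g x) \<in> G \<Otimes>\<^sub>M S \<rightarrow>\<^sub>M prob_algebra S"
    and C_sub: "C \<subseteq> space S"
    and V_meas[measurable]: "V \<in> borel_measurable S" and V_ge1: "\<forall>x\<in>space S. V x \<ge> 1"
    and c_pos: "c > 0"
    and drift: "\<forall>g\<in>space G. \<forall>x\<in>space S.
        (\<integral>\<^sup>+ y. ennreal (V y) \<partial>P g x) \<le> ennreal (V x - c * V x powr \<alpha> + b * indicator C x)"
    and Kc1: "Kc \<ge> 1" and KcC: "\<forall>x\<in>C. V x \<le> Kc"
begin

lemma Pprob:
  assumes "g \<in> space G" "x \<in> space S"
  shows "prob_space (P g x)" "sets (P g x) = sets S" "space (P g x) = space S"
proof -
  have "(g, x) \<in> space (G \<Otimes>\<^sub>M S)" using assms by (simp add: space_pair_measure)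
  from measurable_space[OF kernel this]
  show "prob_space (P g x)" "sets (P g x) = sets S" by (auto simp: space_prob_algebra)
  then show "space (P g x) = space S" using sets_eq_imp_space_eq by blast
qed

lemma VP_meas: "g \<in> space G \<Longrightarrow> x \<in> space S \<Longrightarrow> V \<in> borel_measurable (P g x)"
  using measurable_cong_sets[OF Pprob(2) refl, of g x borel] V_meas by blast

lemma int_ge1:
  assumes "g \<in> space G" "x \<in> space S"
  shows "1 \<le> (\<integral>\<^sup>+ y. ennreal (V y) \<partial>P g x)"
proof -
  interpret prob_space "P g x" using Pprob[OF assms] by simp
  have "(\<integral>\<^sup>+ y. 1 \<partial>P g x) \<le> (\<integral>\<^sup>+ y. ennreal (V y) \<partial>P g x)"
    using V_ge1 Pprob(3)[OF assms] by (intro nn_integral_mono) auto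
  then show ?thesis by (simp add: emeasure_space_1)
qed

lemma drift_off:
  assumes "g \<in> space G" "x \<in> space S" "x \<notin> C"
  shows "(\<integral>\<^sup>+ y. ennreal (V y) \<partial>P g x) \<le> ennreal (V x - c * V x powr \<alpha>)"
    and "1 \<le> V x - c * V x powr \<alpha>"
proof -
  have "(\<integral>\<^sup>+ y. ennreal (V y) \<partial>P g x) \<le> ennreal (V x - c * V x powr \<alpha> + b * indicator C x)"
    using drift assms by blast
  then show A: "(\<integral>\<^sup>+ y. ennreal (V y) \<partial>P g x) \<le> ennreal (V x - c * V x powr \<alpha>)"
    using assms(3) by simp
  have "1 \<le> ennreal (V x - c * V x powr \<alpha>)" using order_trans[OF int_ge1[OF assms(1,2)] A] .
  then show "1 \<le> V x - c * V x powr \<alpha>"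
  proof (cases "V x - c * V x powr \<alpha> \<ge> 0")
    case True
    then show ?thesis using \<open>1 \<le> ennreal _\<close> ennreal_le_iff[OF True, of 1] by simp
  next
    case False
    then show ?thesis using \<open>1 \<le> ennreal _\<close> by (simp add: ennreal_neg)
  qed
qed

lemma drift_C:
  assumes "g \<in> space G" "x \<in> C"
  shows "(\<integral>\<^sup>+ y. ennreal (V y) \<partial>P g x) \<le> ennreal (Kc + \<bar>b\<bar>)"
proof -
  have xS: "x \<in> space S" using assms C_sub by auto
  have "(\<integral>\<^sup>+ y. ennreal (V y) \<partial>P g x) \<le> ennreal (V x - c * V x powr \<alpha> + b * indicator C x)"
    using drift assms xS by blast
  moreover have "V x - c * V x powr \<alpha> + b * indicator C x \<le> Kc + \<bar>b\<bar>"
  proof -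
    have "c * V x powr \<alpha> \<ge> 0" using c_pos by simp
    moreover have "V x \<le> Kc" using KcC assms by blast
    ultimately show ?thesis using assms by (simp add: indicator_def)
  qed
  ultimately show ?thesis using ennreal_leI order_trans by blast
qed

lemma hh_meas[measurable]: "(\<lambda>y. hh \<beta> s (V y)) \<in> borel_measurable S"
  unfolding hh_def by measurable

lemma onestep_off:
  assumes a: "0 < \<alpha>" "\<alpha> < 1" and g: "g \<in> space G" and x: "x \<in> space S" "x \<notin> C" and s: "s \<ge> 0"
  shows "(\<integral>\<^sup>+ y. ennreal (hh (1-\<alpha>) (s + (1-\<alpha>)*c) (V y)) \<partial>P g x) \<le> ennreal (hh (1-\<alpha>) s (V x))"
proof -
  let ?z = "V x - c * V x powr \<alpha>"
  have z1: "1 \<le> ?z" using drift_off(2)[OF g x] .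
  have "(\<integral>\<^sup>+ y. ennreal (hh (1-\<alpha>) (s + (1-\<alpha>)*c) (V y)) \<partial>P g x) \<le> ennreal (hh (1-\<alpha>) (s + (1-\<alpha>)*c) ?z)"
    by (rule jensen_step[OF Pprob(1)[OF g x(1)] VP_meas[OF g x(1)] _ drift_off(1)[OF g x]])
       (use V_ge1 Pprob(3)[OF g x(1)] z1 a s c_pos in auto)
  also have "hh (1-\<alpha>) (s + (1-\<alpha>)*c) ?z \<le> hh (1-\<alpha>) s (V x)"
    using hh_drift[of "1-\<alpha>" s c "V x"] a s c_pos z1 V_ge1 x by auto
  finally show ?thesis by (simp add: ennreal_leI order_trans)
qed

lemma onestep_C:
  assumes a: "0 < \<alpha>" "\<alpha> < 1" and g: "g \<in> space G" and x: "x \<in> C" and s: "s \<ge> 0"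
  shows "(\<integral>\<^sup>+ y. ennreal (hh (1-\<alpha>) s (V y)) \<partial>P g x) \<le> ennreal (hh (1-\<alpha>) s (Kc + \<bar>b\<bar>))"
proof -
  have xS: "x \<in> space S" using x C_sub by auto
  show ?thesis
    by (rule jensen_step[OF Pprob(1)[OF g xS] VP_meas[OF g xS] _ drift_C[OF g x]])
       (use V_ge1 Pprob(3)[OF g xS] a s Kc1 in auto)
qed

end




locale full = kd S G P V C c b \<alpha> Kc + chainctx S G P lags Mw F X \<gamma> x0 g0
  for S :: "'x measure" and G :: "'g measure" and P V C c b \<alpha> Kc lags
    and Mw :: "'w measure" and F X \<gamma> x0 g0 +
  assumes C_sets: "C \<in> sets S" and x0S: "x0 \<in> space S"
begin

lemma spF: "space (F j) = space Mw" using subalg[of j] unfolding subalgebra_def by simp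

lemma X_Fj: "i \<le> j \<Longrightarrow> X i \<in> F j \<rightarrow>\<^sub>M S"
proof -
  assume "i \<le> j"
  then have "subalgebra (F j) (F i)" using Fmono spF unfolding subalgebra_def by metis
  then show ?thesis using measurable_from_subalg X_F by blast
qed

lemma XS: "\<omega> \<in> space Mw \<Longrightarrow> X n \<omega> \<in> space S" using measurable_space[OF X_meas] .
lemma gG: "\<omega> \<in> space Mw \<Longrightarrow> \<gamma> n \<omega> \<in> space G" using measurable_space[OF g_meas] .

definition Ev :: "nat \<Rightarrow> nat \<Rightarrow> 'w set" where
  "Ev k j = {\<omega>\<in>space Mw. X k \<omega> \<in> C \<and> (\<forall>i\<in>{Suc k..j}. X i \<omega> \<notin> C)}"
definition Nv :: "nat \<Rightarrow> 'w set" where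
  "Nv j = {\<omega>\<in>space Mw. \<forall>i\<in>{..j}. X i \<omega> \<notin> C}"
definition Cs :: "nat \<Rightarrow> 'w set" where
  "Cs k = {\<omega>\<in>space Mw. X k \<omega> \<in> C}"

lemma predX: assumes "i \<le> j" shows "Measurable.pred (F j) (\<lambda>\<omega>. X i \<omega> \<in> C)"
  using pred_sets2[OF C_sets X_Fj[OF assms]] .

lemma Ev_sets: "k \<le> j \<Longrightarrow> Ev k j \<in> sets (F j)"
proof -
  assume kj: "k \<le> j"
  have "Measurable.pred (F j) (\<lambda>\<omega>. X k \<omega> \<in> C \<and> (\<forall>i\<in>{Suc k..j}. X i \<omega> \<notin> C))"
    by (intro pred_intros_logic(3) pred_intros_finite(3) pred_intros_logic(2) predX) (use kj in auto)
  then show ?thesis unfolding Ev_def Measurable.pred_def spF .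
qed

lemma Nv_sets: "Nv j \<in> sets (F j)"
proof -
  have "Measurable.pred (F j) (\<lambda>\<omega>. \<forall>i\<in>{..j}. X i \<omega> \<notin> C)"
    by (intro pred_intros_finite(3) pred_intros_logic(2) predX) auto
  then show ?thesis unfolding Nv_def Measurable.pred_def spF .
qed

lemma Cs_sets: "Cs k \<in> sets (F k)"
  using predX[of k k] unfolding Cs_def Measurable.pred_def spF by simp

end

locale fulllt = full +
  assumes a1: "2/3 < \<alpha>" and a2: "\<alpha> < 1"
begin

abbreviation "\<beta> \<equiv> 1 - \<alpha>"
abbreviation "\<kappa> \<equiv> (1 - \<alpha>) * c"
abbreviation "H0 \<equiv> hh (1 - \<alpha>) \<kappa> (Kc + \<bar>b\<bar>)"

lemma kappa_pos: "\<kappa> > 0" using a2 c_pos by simp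

lemma decr:
  assumes B: "B \<in> sets (F j)" and B': "B' \<subseteq> B" and off: "\<forall>\<omega>\<in>B. X j \<omega> \<notin> C" and s: "s \<ge> 0"
  shows "(\<integral>\<^sup>+\<omega>. indicator B' \<omega> * ennreal (hh \<beta> (s + \<kappa>) (V (X (Suc j) \<omega>))) \<partial>Mw)
       \<le> (\<integral>\<^sup>+\<omega>. indicator B \<omega> * ennreal (hh \<beta> s (V (X j \<omega>))) \<partial>Mw)"
proof -
  have "(\<integral>\<^sup>+\<omega>. indicator B' \<omega> * ennreal (hh \<beta> (s + \<kappa>) (V (X (Suc j) \<omega>))) \<partial>Mw)
      \<le> (\<integral>\<^sup>+\<omega>. indicator B \<omega> * ennreal (hh \<beta> (s + \<kappa>) (V (X (Suc j) \<omega>))) \<partial>Mw)"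
    using B' by (intro nn_integral_mono) (auto simp: indicator_def)
  also obtain N where "\<dots> = (\<integral>\<^sup>+\<omega>. indicator B \<omega> * (\<integral>\<^sup>+y. ennreal (hh \<beta> (s + \<kappa>) (V y)) \<partial>P (\<gamma> N \<omega>) (X j \<omega>)) \<partial>Mw)"
    using transition[of "\<lambda>y. ennreal (hh \<beta> (s + \<kappa>) (V y))" B j] B by auto
  also have "\<dots> \<le> (\<integral>\<^sup>+\<omega>. indicator B \<omega> * ennreal (hh \<beta> s (V (X j \<omega>))) \<partial>Mw)"
  proof (intro nn_integral_mono)
    fix \<omega> assume w: "\<omega> \<in> space Mw"
    show "indicator B \<omega> * (\<integral>\<^sup>+y. ennreal (hh \<beta> (s + \<kappa>) (V y)) \<partial>P (\<gamma> N \<omega>) (X j \<omega>))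
        \<le> indicator B \<omega> * ennreal (hh \<beta> s (V (X j \<omega>)))"
    proof (cases "\<omega> \<in> B")
      case True
      have "(\<integral>\<^sup>+y. ennreal (hh \<beta> (s + \<kappa>) (V y)) \<partial>P (\<gamma> N \<omega>) (X j \<omega>)) \<le> ennreal (hh \<beta> s (V (X j \<omega>)))"
        using onestep_off[OF _ a2 gG[OF w] XS[OF w] _ s] off True a1 by auto
      then show ?thesis using True by simp
    qed simp
  qed
  finally show ?thesis .
qed

lemma Ev_bound:
  "(\<integral>\<^sup>+\<omega>. indicator (Ev k (Suc k + d)) \<omega> * ennreal (hh \<beta> (\<kappa> * real (Suc d)) (V (X (Suc k + d) \<omega>))) \<partial>Mw)
     \<le> ennreal H0"
proof (induction d)
  case 0
  have "(\<integral>\<^sup>+\<omega>. indicator (Ev k (Suc k)) \<omega> * ennreal (hh \<beta> \<kappa> (V (X (Suc k) \<omega>))) \<partial>Mw)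
      \<le> (\<integral>\<^sup>+\<omega>. indicator (Cs k) \<omega> * ennreal (hh \<beta> \<kappa> (V (X (Suc k) \<omega>))) \<partial>Mw)"
    by (intro nn_integral_mono) (auto simp: indicator_def Ev_def Cs_def)
  also obtain N where "\<dots> = (\<integral>\<^sup>+\<omega>. indicator (Cs k) \<omega> * (\<integral>\<^sup>+y. ennreal (hh \<beta> \<kappa> (V y)) \<partial>P (\<gamma> N \<omega>) (X k \<omega>)) \<partial>Mw)"
    using transition[of "\<lambda>y. ennreal (hh \<beta> \<kappa> (V y))" "Cs k" k] Cs_sets by auto
  also have "\<dots> \<le> (\<integral>\<^sup>+\<omega>. ennreal H0 \<partial>Mw)"
  proof (intro nn_integral_mono)
    fix \<omega> assume w: "\<omega> \<in> space Mw"
    show "indicator (Cs k) \<omega> * (\<integral>\<^sup>+y. ennreal (hh \<beta> \<kappa> (V y)) \<partial>P (\<gamma> N \<omega>) (X k \<omega>)) \<le> ennreal H0"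
    proof (cases "\<omega> \<in> Cs k")
      case True
      then have "X k \<omega> \<in> C" unfolding Cs_def by auto
      from onestep_C[OF _ a2 gG[OF w] this, of \<kappa>] a1 kappa_pos
      show ?thesis using True by simp
    qed simp
  qed
  also have "\<dots> = ennreal H0" by (simp add: emeasure_space_1)
  finally show ?case by simp
next
  case (Suc d)
  have eq: "\<kappa> * real (Suc (Suc d)) = \<kappa> * real (Suc d) + \<kappa>" by (simp add: algebra_simps)
  have "(\<integral>\<^sup>+\<omega>. indicator (Ev k (Suc k + Suc d)) \<omega> * ennreal (hh \<beta> (\<kappa> * real (Suc (Suc d))) (V (X (Suc k + Suc d) \<omega>))) \<partial>Mw)
      = (\<integral>\<^sup>+\<omega>. indicator (Ev k (Suc (Suc k + d))) \<omega> * ennreal (hh \<beta> (\<kappa> * real (Suc d) + \<kappa>) (V (X (Suc (Suc k + d)) \<omega>))) \<partial>Mw)"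
    by (simp only: eq add_Suc_right)
  also have "\<dots> \<le> (\<integral>\<^sup>+\<omega>. indicator (Ev k (Suc k + d)) \<omega> * ennreal (hh \<beta> (\<kappa> * real (Suc d)) (V (X (Suc k + d) \<omega>))) \<partial>Mw)"
    by (rule decr[OF Ev_sets]) (use kappa_pos in \<open>auto simp: Ev_def\<close>)
  finally show ?case using Suc.IH by (rule order_trans)
qed

lemma Nv_bound:
  "(\<integral>\<^sup>+\<omega>. indicator (Nv j) \<omega> * ennreal (hh \<beta> (\<kappa> * real j) (V (X j \<omega>))) \<partial>Mw) \<le> ennreal (V x0)"
proof (induction j)
  case 0
  have "(\<integral>\<^sup>+\<omega>. indicator (Nv 0) \<omega> * ennreal (hh \<beta> (\<kappa> * real 0) (V (X 0 \<omega>))) \<partial>Mw)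
      \<le> (\<integral>\<^sup>+\<omega>. ennreal (V x0) \<partial>Mw)"
  proof (intro nn_integral_mono)
    fix \<omega> assume w: "\<omega> \<in> space Mw"
    have "hh \<beta> 0 (V x0) = V x0" using hh_zero[of \<beta> "V x0"] a2 V_ge1 XS[OF w] X0[OF w]
      by (metis dual_order.strict_trans1 zero_less_one diff_gt_0_iff_gt)
    then show "indicator (Nv 0) \<omega> * ennreal (hh \<beta> (\<kappa> * real 0) (V (X 0 \<omega>))) \<le> ennreal (V x0)"
      using X0[OF w] by (simp add: indicator_def)
  qed
  also have "\<dots> = ennreal (V x0)" by (simp add: emeasure_space_1)
  finally show ?case .
next
  case (Suc j)
  have eq: "\<kappa> * real (Suc j) = \<kappa> * real j + \<kappa>" by (simp add: algebra_simps)
  have "(\<integral>\<^sup>+\<omega>. indicator (Nv (Suc j)) \<omega> * ennreal (hh \<beta> (\<kappa> * real (Suc j)) (V (X (Suc j) \<omega>))) \<partial>Mw)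
      \<le> (\<integral>\<^sup>+\<omega>. indicator (Nv j) \<omega> * ennreal (hh \<beta> (\<kappa> * real j) (V (X j \<omega>))) \<partial>Mw)"
    unfolding eq by (rule decr[OF Nv_sets]) (use kappa_pos in \<open>auto simp: Nv_def\<close>)
  then show ?case using Suc.IH by (rule order_trans)
qed

end



lemma sum_inv_sq: "(\<Sum>i<n. 1 / (real (Suc i))^2) \<le> 2 - 2 / real (Suc n)"
proof (induction n)
  case 0 then show ?case by simp
next
  case (Suc n)
  define a where "a = real n + 1"
  have p1: "a > 0" unfolding a_def by simp
  have a1: "a \<ge> 1" unfolding a_def by simp
  then have p2: "a * (a + 1) > 0" by simp
  note p = p1 p2
  have "1 / a^2 \<le> 2 / a - 2 / (a + 1)"
  proof -
    have "2 / a - 2 / (a + 1) = 2 / (a * (a + 1))" using p by (simp add: field_simps)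
    have "1 / a^2 = 2 / (2 * a^2)" by simp
    also have "\<dots> \<le> 2 / (a * (a + 1))"
    proof (intro divide_left_mono)
      show "a * (a + 1) \<le> 2 * a^2" using a1 p1 by (simp add: power2_eq_square algebra_simps)
    qed (use p in auto)
    finally show ?thesis using \<open>2 / a - 2 / (a + 1) = _\<close> by simp
  qed
  then have "1 / (real (Suc n))^2 \<le> 2 / real (Suc n) - 2 / real (Suc (Suc n))"
    unfolding a_def by (simp add: add.commute)
  then show ?case using Suc.IH by simp
qed

lemma sum_inv_sq2: "(\<Sum>k<n. 1 / (real (n - k))^2) \<le> 2"
proof -
  have "(\<Sum>k<n. 1 / (real (n - k))^2) = (\<Sum>i<n. 1 / (real (n - (n - Suc i)))^2)"
    by (rule sum.nat_diff_reindex[symmetric])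
  also have "\<dots> = (\<Sum>i<n. 1 / (real (Suc i))^2)"
    by (intro sum.cong) (auto simp: Suc_diff_Suc)
  also have "\<dots> \<le> 2 - 2 / real (Suc n)" by (rule sum_inv_sq)
  also have "\<dots> \<le> 2" by simp
  finally show ?thesis .
qed

context full begin

lemma markov:
  assumes E: "E \<in> sets Mw" and T: "T \<in> sets Mw" and L: "L > 0"
    and ge: "\<forall>\<omega>\<in>E \<inter> T. L \<le> h \<omega>"
    and I: "(\<integral>\<^sup>+\<omega>. indicator E \<omega> * ennreal (h \<omega>) \<partial>Mw) \<le> ennreal R" and R: "R \<ge> 0"
  shows "measure Mw (E \<inter> T) \<le> R / L"
proof -
  have "ennreal (L * measure Mw (E \<inter> T)) = ennreal L * emeasure Mw (E \<inter> T)"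
    using L by (simp add: emeasure_eq_measure ennreal_mult)
  also have "\<dots> = (\<integral>\<^sup>+\<omega>. ennreal L * indicator (E \<inter> T) \<omega> \<partial>Mw)"
    using E T by (simp add: nn_integral_cmult_indicator)
  also have "\<dots> \<le> (\<integral>\<^sup>+\<omega>. indicator E \<omega> * ennreal (h \<omega>) \<partial>Mw)"
    using ge by (intro nn_integral_mono) (auto simp: indicator_def ennreal_leI)
  also have "\<dots> \<le> ennreal R" by (rule I)
  finally have "L * measure Mw (E \<inter> T) \<le> R" using R by (simp add: ennreal_le_iff)
  then show ?thesis using L by (simp add: field_simps)
qed

end

context fulllt begin

lemma cover:
  assumes t: "t > Kc"
  shows "{\<omega>\<in>space Mw. V (X n \<omega>) > t} \<subseteq> Nv n \<union> (\<Union>k<n. Ev k n)"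
proof
  fix \<omega> assume "\<omega> \<in> {\<omega>\<in>space Mw. V (X n \<omega>) > t}"
  then have w: "\<omega> \<in> space Mw" and Vt: "V (X n \<omega>) > t" by auto
  have nC: "X n \<omega> \<notin> C" using KcC Vt t by force
  show "\<omega> \<in> Nv n \<union> (\<Union>k<n. Ev k n)"
  proof (cases "\<forall>i\<le>n. X i \<omega> \<notin> C")
    case True then show ?thesis using w by (auto simp: Nv_def)
  next
    case False
    define I where "I = {i. i \<le> n \<and> X i \<omega> \<in> C}"
    have fI: "finite I" unfolding I_def by simp
    have neI: "I \<noteq> {}" using False unfolding I_def by auto
    define k where "k = Max I"
    have kI: "k \<in> I" unfolding k_def using Max_in[OF fI neI] .
    have kn: "k < n" using kI nC unfolding I_def by (cases "k = n") auto
    have "\<forall>i\<in>{Suc k..n}. X i \<omega> \<notin> C"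
    proof (intro ballI notI)
      fix i assume i: "i \<in> {Suc k..n}" "X i \<omega> \<in> C"
      then have "i \<in> I" unfolding I_def by auto
      then have "i \<le> k" unfolding k_def using Max_ge[OF fI] by blast
      then show False using i by auto
    qed
    then have "\<omega> \<in> Ev k n" using w kI unfolding Ev_def I_def by auto
    then show ?thesis using kn by auto
  qed
qed

lemma tail:
  assumes n: "n > 0" and t1: "t \<ge> 1" and tK: "t > Kc"
  shows "measure Mw {\<omega>\<in>space Mw. V (X n \<omega>) > t}
           \<le> V x0 / t + 2 * H0 / (t powr (2*\<alpha>-1) * \<kappa>^2)"
proof -
  define T where "T = {\<omega>\<in>space Mw. V (X n \<omega>) > t}"
  have T: "T \<in> sets Mw" unfolding T_def by measurable
  have Ev_M: "Ev k n \<in> sets Mw" if "k < n" for k using F_sets[OF Ev_sets[of k n]] that by simp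
  have Nv_M: "Nv n \<in> sets Mw" using F_sets[OF Nv_sets] .
  have e: "1 - 2 * (1 - \<alpha>) = 2*\<alpha> - 1" by simp
  have b12: "1 - \<alpha> \<le> 1/2" using a1 by simp
  have bpos: "0 < 1 - \<alpha>" using a2 by simp
  have H0: "H0 \<ge> 0" by (rule hh_nonneg)
  have tpos: "t > 0" using t1 by simp
  have VX: "\<And>\<omega>. \<omega> \<in> space Mw \<Longrightarrow> V (X n \<omega>) \<ge> 1" using V_ge1 XS by blast
  have "T \<subseteq> (Nv n \<inter> T) \<union> (\<Union>k<n. Ev k n \<inter> T)"
    using cover[OF tK, of n] unfolding T_def by blast
  then have "measure Mw T \<le> measure Mw ((Nv n \<inter> T) \<union> (\<Union>k<n. Ev k n \<inter> T))"
    using Nv_M Ev_M T by (intro finite_measure_mono) auto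
  also have "\<dots> \<le> measure Mw (Nv n \<inter> T) + measure Mw (\<Union>k<n. Ev k n \<inter> T)"
    using Nv_M Ev_M T by (intro measure_Un_le) auto
  also have "measure Mw (\<Union>k<n. Ev k n \<inter> T) \<le> (\<Sum>k<n. measure Mw (Ev k n \<inter> T))"
    using Ev_M T by (intro finite_measure_subadditive_finite) auto
  also have "measure Mw (Nv n \<inter> T) \<le> V x0 / t"
  proof (rule markov[OF Nv_M T tpos _ Nv_bound])
    show "\<forall>\<omega>\<in>Nv n \<inter> T. t \<le> hh (1-\<alpha>) (\<kappa> * real n) (V (X n \<omega>))"
      using hh_lower(2)[OF bpos b12 _ tpos] kappa_pos unfolding T_def by (auto intro: less_imp_le)
    show "V x0 \<ge> 0" using V_ge1 x0S by auto
  qed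
  also have "(\<Sum>k<n. measure Mw (Ev k n \<inter> T)) \<le> (\<Sum>k<n. (H0 / (t powr (2*\<alpha>-1) * \<kappa>^2)) * (1 / (real (n - k))^2))"
  proof (intro sum_mono)
    fix k assume k: "k \<in> {..<n}"
    have nk: "n = Suc k + (n - Suc k)" "Suc (n - Suc k) = n - k" using k by auto
    have Lpos: "t powr (2*\<alpha>-1) * (\<kappa> * real (n - k))^2 > 0"
      using tpos kappa_pos k by (intro mult_pos_pos) (auto simp del: of_nat_diff)
    have "measure Mw (Ev k n \<inter> T) \<le> H0 / (t powr (2*\<alpha>-1) * (\<kappa> * real (n - k))^2)"
    proof (rule markov[OF Ev_M[OF _] T Lpos _ _ H0])
      show "k < n" using k by simp
      show "\<forall>\<omega>\<in>Ev k n \<inter> T. t powr (2*\<alpha>-1) * (\<kappa> * real (n - k))^2 \<le> hh (1-\<alpha>) (\<kappa> * real (n - k)) (V (X n \<omega>))"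
        using hh_lower(1)[OF bpos b12 _ tpos] kappa_pos unfolding T_def e by (auto intro: less_imp_le)
      show "(\<integral>\<^sup>+\<omega>. indicator (Ev k n) \<omega> * ennreal (hh (1-\<alpha>) (\<kappa> * real (n - k)) (V (X n \<omega>))) \<partial>Mw) \<le> ennreal H0"
        using Ev_bound[of k "n - Suc k"] nk by simp
    qed
    also have "\<dots> = (H0 / (t powr (2*\<alpha>-1) * \<kappa>^2)) * (1 / (real (n - k))^2)"
      by (simp add: power_mult_distrib)
    finally show "measure Mw (Ev k n \<inter> T) \<le> (H0 / (t powr (2*\<alpha>-1) * \<kappa>^2)) * (1 / (real (n - k))^2)" .
  qed
  also have "\<dots> = (H0 / (t powr (2*\<alpha>-1) * \<kappa>^2)) * (\<Sum>k<n. 1 / (real (n - k))^2)"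
    by (simp add: sum_distrib_left)
  also have "\<dots> \<le> (H0 / (t powr (2*\<alpha>-1) * \<kappa>^2)) * 2"
    using H0 sum_inv_sq2[of n] tpos by (intro mult_left_mono) auto
  finally show ?thesis unfolding T_def by (simp add: mult.commute)
qed

end



lemma final_ineq:
  fixes Q A Mb v m :: real
  assumes m: "m \<ge> 3" and Q: "Q \<le> A * v / m" and A: "A \<le> Mb" and v: "v \<ge> 1" and Mb0: "Mb \<ge> 0"
  shows "Q \<le> Mb * v * ln (1 + m) / m"
proof -
  have "exp 1 \<le> 1 + m" using exp_le m by linarith
  then have l: "1 \<le> ln (1 + m)" using m by (subst ln_ge_iff) auto
  have "A * v / m \<le> Mb * v / m" using A v m by (intro divide_right_mono mult_right_mono) auto
  also have "Mb * v / m \<le> Mb * v * ln (1 + m) / m"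
  proof -
    have "Mb * v * 1 \<le> Mb * v * ln (1 + m)"
      using l v Mb0 by (intro mult_left_mono) auto
    then show ?thesis using m by (intro divide_right_mono) auto
  qed
  finally show ?thesis using Q by linarith
qed


context fulllt begin

lemma final_lt:
  assumes n: "n > 0" and m: "m \<ge> max (Kc + 1) (max 3 (1 + 2 * H0 / \<kappa>^2))"
  shows "measure Mw {\<omega>\<in>space Mw. V (X n \<omega>) powr (2 * \<alpha> - 1) > m}
           \<le> max (Kc + 1) (max 3 (1 + 2 * H0 / \<kappa>^2)) * V x0 * ln (1 + m) / m"
proof -
  define e where "e = 2 * \<alpha> - 1"
  have e: "0 < e" "e < 1" unfolding e_def using a1 a2 by auto
  have m3: "m \<ge> 3" and mK: "m \<ge> Kc + 1" using m by auto
  define t where "t = m powr (1 / e)"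
  have "m powr 1 \<le> m powr (1 / e)" using e m3 by (intro powr_mono) auto
  then have tm: "m \<le> t" unfolding t_def using m3 by simp
  have te: "t powr e = m" unfolding t_def using e m3 by (simp add: powr_powr)
  have t1: "t \<ge> 1" and tK: "t > Kc" using tm m3 mK by auto
  have tpos: "t > 0" using t1 by simp
  have seteq: "{\<omega>\<in>space Mw. V (X n \<omega>) powr (2 * \<alpha> - 1) > m} = {\<omega>\<in>space Mw. V (X n \<omega>) > t}"
  proof (intro Collect_cong conj_cong refl)
    fix \<omega> assume w: "\<omega> \<in> space Mw"
    have v1: "V (X n \<omega>) \<ge> 1" using V_ge1 XS[OF w] by blast
    show "(V (X n \<omega>) powr (2 * \<alpha> - 1) > m) = (V (X n \<omega>) > t)"
    proof
      assume "V (X n \<omega>) powr (2 * \<alpha> - 1) > m"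
      then have "t powr e < V (X n \<omega>) powr e" using te e_def by simp
      then show "V (X n \<omega>) > t" using e tpos v1
        by (metis linorder_not_le powr_mono2 less_le_trans zero_less_one less_imp_le)
    next
      assume "V (X n \<omega>) > t"
      then have "t powr e < V (X n \<omega>) powr e" using e tpos by (intro powr_less_mono2) auto
      then show "V (X n \<omega>) powr (2 * \<alpha> - 1) > m" using te e_def by simp
    qed
  qed
  have H0: "H0 \<ge> 0" by (rule hh_nonneg)
  have v0: "V x0 \<ge> 1" using V_ge1 x0S by blast
  have "measure Mw {\<omega>\<in>space Mw. V (X n \<omega>) > t} \<le> V x0 / t + 2 * H0 / (t powr (2*\<alpha>-1) * \<kappa>^2)"
    by (rule tail[OF n t1 tK])
  also have "t powr (2*\<alpha>-1) = m" using te e_def by simp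
  also have "V x0 / t \<le> V x0 / m" using v0 tm m3 by (intro divide_left_mono) auto
  also have "V x0 / m + 2 * H0 / (m * \<kappa>^2) = (V x0 + 2 * H0 / \<kappa>^2) / m"
    using kappa_pos m3 by (simp add: field_simps)
  also have "V x0 + 2 * H0 / \<kappa>^2 \<le> (1 + 2 * H0 / \<kappa>^2) * V x0"
  proof -
    have Q: "2 * H0 / \<kappa>^2 \<ge> 0" using H0 by simp
    have "2 * H0 / \<kappa>^2 * 1 \<le> 2 * H0 / \<kappa>^2 * V x0" by (rule mult_left_mono[OF v0 Q])
    then show ?thesis by (simp add: algebra_simps)
  qed
  finally have "measure Mw {\<omega>\<in>space Mw. V (X n \<omega>) > t} \<le> (1 + 2 * H0 / \<kappa>^2) * V x0 / m"
    using m3 by (simp add: divide_right_mono)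
  then show ?thesis unfolding seteq
    by (rule final_ineq[OF m3 _ _ v0]) auto
qed

end




context kd begin

lemma bounded_gt1:
  assumes a: "1 < \<alpha>" and g: "g \<in> space G" and x: "x \<in> space S"
  shows "V x \<le> max Kc ((1/c) powr (1/(\<alpha>-1)))"
proof (cases "x \<in> C")
  case True then show ?thesis using KcC by auto
next
  case False
  have v1: "V x \<ge> 1" using V_ge1 x by blast
  have "1 \<le> V x - c * V x powr \<alpha>" using drift_off(2)[OF g x False] .
  then have lt: "c * V x powr \<alpha> < V x" by linarith
  have "V x powr \<alpha> = V x powr (1 + (\<alpha> - 1))" by simp
  also have "\<dots> = V x powr 1 * V x powr (\<alpha> - 1)" by (rule powr_add)
  also have "V x powr 1 = V x" using v1 by simp
  finally have "V x powr \<alpha> = V x * V x powr (\<alpha> - 1)" .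
  then have "c * V x powr (\<alpha> - 1) * V x < 1 * V x" using lt by (simp add: algebra_simps)
  then have "c * V x powr (\<alpha> - 1) < 1" using v1 by (simp add: mult_less_cancel_right)
  then have A: "V x powr (\<alpha> - 1) < 1 / c" using c_pos by (simp add: field_simps)
  have "V x = (V x powr (\<alpha> - 1)) powr (1/(\<alpha>-1))" using a v1 by (simp add: powr_powr)
  also have "\<dots> < (1/c) powr (1/(\<alpha>-1))" using A a v1 by (intro powr_less_mono2) auto
  finally show ?thesis by simp
qed

end

context full begin

lemma final_gt1:
  assumes a: "1 < \<alpha>" and m: "m \<ge> (max Kc ((1/c) powr (1/(\<alpha>-1)))) powr (2*\<alpha>-1) + 1"
    and Mb0: "Mb \<ge> 0"
  shows "measure Mw {\<omega>\<in>space Mw. V (X n \<omega>) powr (2 * \<alpha> - 1) > m} \<le> Mb * V x0 * ln (1 + m) / m"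
proof -
  have E: "{\<omega>\<in>space Mw. V (X n \<omega>) powr (2 * \<alpha> - 1) > m} = {}"
  proof (safe)
    fix \<omega> assume w: "\<omega> \<in> space Mw" and gt: "V (X n \<omega>) powr (2 * \<alpha> - 1) > m"
    have "V (X n \<omega>) \<le> max Kc ((1/c) powr (1/(\<alpha>-1)))"
      using bounded_gt1[OF a gG[OF w] XS[OF w]] .
    moreover have "V (X n \<omega>) \<ge> 1" using V_ge1 XS[OF w] by blast
    ultimately have "V (X n \<omega>) powr (2 * \<alpha> - 1) \<le> (max Kc ((1/c) powr (1/(\<alpha>-1)))) powr (2*\<alpha>-1)"
      using a by (intro powr_mono2) auto
    then show "\<omega> \<in> {}" using gt m by simp
  qed
  have m0: "m > 0" using m powr_ge_zero[of "max Kc ((1/c) powr (1/(\<alpha>-1)))" "2*\<alpha>-1"] by linarith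
  have v0: "V x0 \<ge> 0" using V_ge1 x0S by (meson order_trans zero_le_one)
  have "ln (1 + m) \<ge> 0" using m0 by simp
  then have "0 \<le> Mb * V x0 * ln (1 + m) / m" using Mb0 v0 m0 by simp
  then show ?thesis by (simp only: E measure_empty)
qed

lemma final_eq1:
  assumes a: "\<alpha> = 1" and m: "m \<ge> max 3 (1 + \<bar>b\<bar> / min c (1/2))" and n: "n > 0"
  shows "measure Mw {\<omega>\<in>space Mw. V (X n \<omega>) powr (2 * \<alpha> - 1) > m}
     \<le> max 3 (1 + \<bar>b\<bar> / min c (1/2)) * V x0 * ln (1 + m) / m"
proof -
  define cp where "cp = min c (1/2)"
  have cp: "0 < cp" "cp \<le> 1/2" "cp \<le> c" unfolding cp_def using c_pos by auto
  define R where "R = V x0 + \<bar>b\<bar> / cp"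
  have v0: "V x0 \<ge> 1" using V_ge1 x0S by blast
  have onestep: "(\<integral>\<^sup>+ y. ennreal (V y) \<partial>P g x) \<le> ennreal ((1 - cp) * V x + \<bar>b\<bar>)"
    if g: "g \<in> space G" and x: "x \<in> space S" for g x
  proof -
    have v1: "V x \<ge> 1" using V_ge1 x by blast
    have "(\<integral>\<^sup>+ y. ennreal (V y) \<partial>P g x) \<le> ennreal (V x - c * V x powr \<alpha> + b * indicator C x)"
      using drift g x by blast
    moreover have "V x - c * V x powr \<alpha> + b * indicator C x \<le> (1 - cp) * V x + \<bar>b\<bar>"
    proof -
      have "V x powr \<alpha> = V x" using a v1 by simp
      moreover have "cp * V x \<le> c * V x" using cp v1 by (intro mult_right_mono) auto
      moreover have "b * indicator C x \<le> \<bar>b\<bar>" by (auto simp: indicator_def)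
      ultimately show ?thesis by (simp add: algebra_simps)
    qed
    ultimately show ?thesis using ennreal_leI order_trans by blast
  qed
  have EV: "(\<integral>\<^sup>+\<omega>. ennreal (V (X j \<omega>)) \<partial>Mw) \<le> ennreal R" for j
  proof (induction j)
    case 0
    have "(\<integral>\<^sup>+\<omega>. ennreal (V (X 0 \<omega>)) \<partial>Mw) = (\<integral>\<^sup>+\<omega>. ennreal (V x0) \<partial>Mw)"
      by (intro nn_integral_cong) (simp add: X0)
    also have "\<dots> = ennreal (V x0)" by (simp add: emeasure_space_1)
    also have "\<dots> \<le> ennreal R" unfolding R_def using cp by (intro ennreal_leI) auto
    finally show ?case .
  next
    case (Suc j)
    have sp: "space Mw \<in> sets (F j)" using sets.top[of "F j"] spF by simp
    have "(\<integral>\<^sup>+\<omega>. ennreal (V (X (Suc j) \<omega>)) \<partial>Mw) = (\<integral>\<^sup>+\<omega>. indicator (space Mw) \<omega> * ennreal (V (X (Suc j) \<omega>)) \<partial>Mw)"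
      by (intro nn_integral_cong) simp
    also obtain N where "\<dots> = (\<integral>\<^sup>+\<omega>. indicator (space Mw) \<omega> * (\<integral>\<^sup>+y. ennreal (V y) \<partial>P (\<gamma> N \<omega>) (X j \<omega>)) \<partial>Mw)"
      using transition[of "\<lambda>y. ennreal (V y)" "space Mw" j] sp by auto
    also have "\<dots> \<le> (\<integral>\<^sup>+\<omega>. ennreal (1 - cp) * ennreal (V (X j \<omega>)) + ennreal \<bar>b\<bar> \<partial>Mw)"
    proof (intro nn_integral_mono)
      fix \<omega> assume w: "\<omega> \<in> space Mw"
      have vj: "V (X j \<omega>) \<ge> 1" using V_ge1 XS[OF w] by blast
      have "(1 - cp) * V (X j \<omega>) \<ge> 0" using cp vj by (intro mult_nonneg_nonneg) auto
      have em: "ennreal ((1 - cp) * V (X j \<omega>)) = ennreal (1 - cp) * ennreal (V (X j \<omega>))"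
        by (rule ennreal_mult) (use cp vj in auto)
      have "ennreal ((1 - cp) * V (X j \<omega>) + \<bar>b\<bar>) = ennreal (1 - cp) * ennreal (V (X j \<omega>)) + ennreal \<bar>b\<bar>"
        using \<open>(1 - cp) * V (X j \<omega>) \<ge> 0\<close> by (simp add: ennreal_plus em)
      then show "indicator (space Mw) \<omega> * (\<integral>\<^sup>+y. ennreal (V y) \<partial>P (\<gamma> N \<omega>) (X j \<omega>))
          \<le> ennreal (1 - cp) * ennreal (V (X j \<omega>)) + ennreal \<bar>b\<bar>"
        using onestep[OF gG[OF w] XS[OF w], of N j] w by (simp del: ennreal_plus)
    qed
    also have "\<dots> = ennreal (1 - cp) * (\<integral>\<^sup>+\<omega>. ennreal (V (X j \<omega>)) \<partial>Mw) + ennreal \<bar>b\<bar>"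
      by (simp add: nn_integral_add nn_integral_cmult emeasure_space_1)
    also have "\<dots> \<le> ennreal (1 - cp) * ennreal R + ennreal \<bar>b\<bar>"
      using Suc.IH by (intro add_mono mult_left_mono) auto
    also have "\<dots> = ennreal ((1 - cp) * R + \<bar>b\<bar>)"
      using cp v0 unfolding R_def by (simp add: ennreal_plus ennreal_mult)
    also have "\<dots> \<le> ennreal R"
    proof (intro ennreal_leI)
      have "(1 - cp) * R + \<bar>b\<bar> = R - cp * V x0" unfolding R_def using cp by (simp add: field_simps)
      then show "(1 - cp) * R + \<bar>b\<bar> \<le> R" using cp v0 by simp
    qed
    finally show ?case .
  qed
  have m3: "m \<ge> 3" using m by simp
  have T: "{\<omega>\<in>space Mw. V (X n \<omega>) > m} \<in> sets Mw" by measurable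
  have seteq: "{\<omega>\<in>space Mw. V (X n \<omega>) powr (2 * \<alpha> - 1) > m} = space Mw \<inter> {\<omega>\<in>space Mw. V (X n \<omega>) > m}"
    using a V_ge1 XS by (auto simp: powr_one_gt_zero_iff) (smt (verit) powr_one)+
  have "measure Mw (space Mw \<inter> {\<omega>\<in>space Mw. V (X n \<omega>) > m}) \<le> R / m"
  proof (rule markov[OF sets.top T, where h="\<lambda>\<omega>. V (X n \<omega>)"])
    have "(\<integral>\<^sup>+\<omega>. indicator (space Mw) \<omega> * ennreal (V (X n \<omega>)) \<partial>Mw) = (\<integral>\<^sup>+\<omega>. ennreal (V (X n \<omega>)) \<partial>Mw)"
      by (intro nn_integral_cong) simp
    then show "(\<integral>\<^sup>+\<omega>. indicator (space Mw) \<omega> * ennreal (V (X n \<omega>)) \<partial>Mw) \<le> ennreal R"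
      using EV[of n] by simp
    show "R \<ge> 0" unfolding R_def using cp v0 by simp
  qed (use m3 in auto)
  also have "R \<le> (1 + \<bar>b\<bar> / cp) * V x0"
  proof -
    have Q: "\<bar>b\<bar> / cp \<ge> 0" using cp by simp
    have "\<bar>b\<bar> / cp * 1 \<le> \<bar>b\<bar> / cp * V x0" by (rule mult_left_mono[OF v0 Q])
    then show ?thesis unfolding R_def by (simp add: algebra_simps)
  qed
  finally have "measure Mw (space Mw \<inter> {\<omega>\<in>space Mw. V (X n \<omega>) > m}) \<le> (1 + \<bar>b\<bar> / cp) * V x0 / m"
    using m3 by (simp add: divide_right_mono)
  then show ?thesis unfolding seteq cp_def
    by (rule final_ineq[OF m3 _ _ v0]) (auto simp: max_def)
qed

end

theorem mainTheorem14:
  fixes S :: "'x measure" and G :: "'g measure"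
    and P :: "'g \<Rightarrow> 'x \<Rightarrow> 'x measure"
    and \<pi> :: "'x measure" and C :: "'x set"
    and \<delta> :: real and \<nu> :: "'x measure"
    and V :: "'x \<Rightarrow> real" and c b \<alpha> :: real
    and lags :: "nat \<Rightarrow> nat"
  assumes kernel: "(\<lambda>(g, x). P g x) \<in> G \<Otimes>\<^sub>M S \<rightarrow>\<^sub>M prob_algebra S"
    and pi_prob: "prob_space \<pi>" and pi_sets: "sets \<pi> = sets S"
    and invariant: "\<forall>g\<in>space G. pi_invariant S \<pi> (P g)"
    and irreducible: "\<forall>g\<in>space G. pi_irreducible S \<pi> (P g)"
    and aperiodic: "\<forall>g\<in>space G. aperiodic_kernel S \<pi> (P g)"
    and C_sets: "C \<in> sets S" and C_pos: "measure \<pi> C > 0"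
    and delta_pos: "\<delta> > 0"
    and nu_prob: "prob_space \<nu>" and nu_sets: "sets \<nu> = sets S"
    and minor: "\<forall>g\<in>space G. \<forall>x\<in>C. \<forall>A\<in>sets S. measure (P g x) A \<ge> \<delta> * measure \<nu> A"
    and V_meas: "V \<in> borel_measurable S" and V_ge1: "\<forall>x\<in>space S. V x \<ge> 1"
    and c_pos: "c > 0"
    and alpha: "\<alpha> > 2/3"
    and drift: "\<forall>g\<in>space G. \<forall>x\<in>space S.
        (\<integral>\<^sup>+ y. ennreal (V y) \<partial>P g x) \<le> ennreal (V x - c * V x powr \<alpha> + b * indicator C x)"
    and V_C_bdd: "bdd_above (V ` C)"
    and lags_pos: "\<forall>k\<ge>1. lags k \<ge> 1"
  shows "\<exists>Mb::real. \<forall>(Mw::'w measure) F X \<gamma> x0 g0.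
           x0 \<in> space S \<and> g0 \<in> space G \<and> airmcmc_chain S G P lags Mw F X \<gamma> x0 g0 \<longrightarrow>
           (\<forall>n>0. \<forall>m\<ge>Mb.
              measure Mw {\<omega>\<in>space Mw. V (X n \<omega>) powr (2 * \<alpha> - 1) > m}
                \<le> Mb * V x0 * ln (1 + m) / m)"
proof -
  define Kc where "Kc = max 1 (Sup (V ` C))"
  have Csub: "C \<subseteq> space S" using sets.sets_into_space[OF C_sets] .
  have KcC: "\<forall>x\<in>C. V x \<le> Kc"
  proof
    fix x assume "x \<in> C"
    then have "V x \<le> Sup (V ` C)" using cSup_upper[OF imageI V_C_bdd] by blast
    then show "V x \<le> Kc" unfolding Kc_def by simp
  qed
  have Kc1: "Kc \<ge> 1" unfolding Kc_def by simp
  interpret K: kd S G P V C c b \<alpha> Kc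
    by unfold_locales (use kernel Csub V_meas V_ge1 c_pos drift Kc1 KcC in auto)
  have full: "full S G P V C c b \<alpha> Kc lags Mw F X \<gamma> x0 g0"
    if H: "x0 \<in> space S \<and> g0 \<in> space G \<and> airmcmc_chain S G P lags Mw F X \<gamma> x0 g0" for Mw :: "'w measure" and F X \<gamma> x0 g0
    by (intro full.intro K.kd_axioms chainctx.intro full_axioms.intro) (use H kernel lags_pos C_sets in auto)
  consider (lt) "\<alpha> < 1" | (eq) "\<alpha> = 1" | (gt) "\<alpha> > 1" by linarith
  then show ?thesis
  proof cases
    case lt
    define Mb where "Mb = max (Kc + 1) (max 3 (1 + 2 * hh (1 - \<alpha>) ((1 - \<alpha>) * c) (Kc + \<bar>b\<bar>) / ((1 - \<alpha>) * c)^2))"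
    show ?thesis
    proof (rule exI[of _ Mb], (rule allI)+, rule impI)
      fix Mw :: "'w measure" and F X \<gamma> x0 g0
      assume H: "x0 \<in> space S \<and> g0 \<in> space G \<and> airmcmc_chain S G P lags Mw F X \<gamma> x0 g0"
      interpret L: fulllt S G P V C c b \<alpha> Kc lags Mw F X \<gamma> x0 g0
        by (intro fulllt.intro full[OF H] fulllt_axioms.intro) (use alpha lt in auto)
      show "\<forall>n>0. \<forall>m\<ge>Mb. measure Mw {\<omega>\<in>space Mw. V (X n \<omega>) powr (2 * \<alpha> - 1) > m}
                \<le> Mb * V x0 * ln (1 + m) / m"
        using L.final_lt unfolding Mb_def by blast
    qed
  next
    case eq
    define Mb where "Mb = max 3 (1 + \<bar>b\<bar> / min c (1/2))"
    show ?thesis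
    proof (rule exI[of _ Mb], (rule allI)+, rule impI)
      fix Mw :: "'w measure" and F X \<gamma> x0 g0
      assume H: "x0 \<in> space S \<and> g0 \<in> space G \<and> airmcmc_chain S G P lags Mw F X \<gamma> x0 g0"
      interpret L: full S G P V C c b \<alpha> Kc lags Mw F X \<gamma> x0 g0 by (rule full[OF H])
      show "\<forall>n>0. \<forall>m\<ge>Mb. measure Mw {\<omega>\<in>space Mw. V (X n \<omega>) powr (2 * \<alpha> - 1) > m}
                \<le> Mb * V x0 * ln (1 + m) / m"
        using L.final_eq1[OF eq] unfolding Mb_def by blast
    qed
  next
    case gt
    define Mb where "Mb = (max Kc ((1/c) powr (1/(\<alpha>-1)))) powr (2*\<alpha>-1) + 1"
    have Mb0: "Mb \<ge> 0" unfolding Mb_def by (smt (verit) powr_ge_zero)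
    show ?thesis
    proof (rule exI[of _ Mb], (rule allI)+, rule impI)
      fix Mw :: "'w measure" and F X \<gamma> x0 g0
      assume H: "x0 \<in> space S \<and> g0 \<in> space G \<and> airmcmc_chain S G P lags Mw F X \<gamma> x0 g0"
      interpret L: full S G P V C c b \<alpha> Kc lags Mw F X \<gamma> x0 g0 by (rule full[OF H])
      show "\<forall>n>0. \<forall>m\<ge>Mb. measure Mw {\<omega>\<in>space Mw. V (X n \<omega>) powr (2 * \<alpha> - 1) > m}
                \<le> Mb * V x0 * ln (1 + m) / m"
        using L.final_gt1[OF gt _ Mb0] unfolding Mb_def by blast
    qed
  qed
qed

end
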